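(* Let $\sigma=\{\gamma_d(s_1),\dots\}$ and $\tau$ be simplices on $\gamma_d$ (finite subsets of $\gamma_d$ of size at most $d+1$) which are $(d+2)$-interlacing, where the interlacing sequence begins with an element of $\sigma$ if $d$ is even, and begins with an element of $\tau$ if $d$ is odd. Then there is a point $p\in\mathrm{conv}(\sigma)\cap\mathrm{conv}(\tau)$ with $h_\sigma(p)<h_\tau(p)$.
   Context: $\gamma_d=\{(t,t^2,\dots,t^d):t\in\mathbb{R}\}$ is the moment curve in $\mathbb{R}^d$, and points of $\gamma_d$ are linearly ordered by their parameter $t$. For subsets $\sigma,\tau\subseteq\gamma_d$, they are $k$-interlacing if there is a sequence $v_1<v_2<\dots<v_k$ of elements of $\sigma\cup\tau$ such that either $v_1\in\sigma, v_2\in\tau, v_3\in\sigma,\dots$ (alternating, beginning with an element of $\sigma$) or $v_1\in\tau,v_2\in\sigma,v_3\in\tau,\dots$ (alternating, beginning with an element of $\tau$). For a simplex $\sigma=\{\gamma_d(t_1),\dots,\gamma_d(t_k)\}$, $k\le d+1$, its lifting is $\hat\sigma=\{\gamma_{d+1}(t_1),\dots,\gamma_{d+1}(t_k)\}$, and the height function $h_\sigma:\mathrm{conv}(\sigma)\to\mathbb{R}$ assigns to $p$ the last coordinate of the unique point of $\mathrm{conv}(\hat\sigma)$ whose projection (deleting the last coordinate) is $p$. *)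

theory Defs
  imports "HOL-Analysis.Analysis"
begin

text \<open>Points of R^d are represented as functions nat => real whose coordinates
  1..d are meaningful (all other coordinates are 0).\<close>

definition moment :: "nat \<Rightarrow> real \<Rightarrow> (nat \<Rightarrow> real)" where
  "moment d t = (\<lambda>j. if 1 \<le> j \<and> j \<le> d then t ^ j else 0)"

definition conv_fin :: "(nat \<Rightarrow> real) set \<Rightarrow> (nat \<Rightarrow> real) set" where
  "conv_fin P = {p. \<exists>u. (\<forall>x\<in>P. 0 \<le> u x) \<and> sum u P = 1 \<and>
                        p = (\<lambda>j. \<Sum>x\<in>P. u x * x j)}"

definition conv_simplex :: "nat \<Rightarrow> real set \<Rightarrow> (nat \<Rightarrow> real) set" where
  "conv_simplex d S = conv_fin (moment d ` S)"

definition proj :: "nat \<Rightarrow> (nat \<Rightarrow> real) \<Rightarrow> (nat \<Rightarrow> real)" where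
  "proj d q = (\<lambda>j. if j \<le> d then q j else 0)"

definition height :: "nat \<Rightarrow> real set \<Rightarrow> (nat \<Rightarrow> real) \<Rightarrow> real" where
  "height d S p = (THE q. q \<in> conv_simplex (Suc d) S \<and> proj d q = p) (Suc d)"

definition interlacing_from :: "real set \<Rightarrow> real set \<Rightarrow> nat \<Rightarrow> bool" where
  "interlacing_from A B k =
     (\<exists>v::nat \<Rightarrow> real. (\<forall>i j. i < j \<and> j < k \<longrightarrow> v i < v j) \<and>
        (\<forall>i<k. v i \<in> (if even i then A else B)))"

definition interlacing :: "real set \<Rightarrow> real set \<Rightarrow> nat \<Rightarrow> bool" where
  "interlacing A B k = (interlacing_from A B k \<or> interlacing_from B A k)"

end

theory Submission
  imports Defs
begin


definition lam :: "real set \<Rightarrow> real \<Rightarrow> real" where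
  "lam V x = 1 / (\<Prod>y\<in>V-{x}. (x - y))"

lemma lam_insert:
  assumes "finite V" "b \<notin> V" "x \<in> V"
  shows "lam (insert b V) x = lam V x / (x - b)"
proof -
  have "insert b V - {x} = insert b (V - {x})" using assms by auto
  hence "(\<Prod>y\<in>insert b V-{x}. (x - y)) = (x - b) * (\<Prod>y\<in>V-{x}. (x - y))"
    using assms by simp
  thus ?thesis unfolding lam_def by simp
qed

lemma lam_insert_self:
  assumes "finite V" "b \<notin> V"
  shows "lam (insert b V) b = 1 / (\<Prod>y\<in>V. (b - y))"
proof -
  have "insert b V - {b} = V" using assms by auto
  thus ?thesis unfolding lam_def by simp
qed

lemma lam_pf:
  assumes "finite V" "V \<noteq> {}" "a \<notin> V"
  shows "(\<Sum>x\<in>V. lam V x / (a - x)) = 1 / (\<Prod>y\<in>V. (a - y))"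
  using assms
proof (induction V arbitrary: a rule: finite_ne_induct)
  case (singleton x)
  then show ?case by (simp add: lam_def)
next
  case (insert b V)
  have ab: "a \<noteq> b" using insert by auto
  have nz: "\<And>x. x \<in> V \<Longrightarrow> x - b \<noteq> 0 \<and> a - x \<noteq> 0" using insert by auto
  have "(\<Sum>x\<in>insert b V. lam (insert b V) x / (a - x))
      = lam (insert b V) b / (a - b) + (\<Sum>x\<in>V. lam V x / (x - b) / (a - x))"
    using insert by (simp add: lam_insert)
  also have "(\<Sum>x\<in>V. lam V x / (x - b) / (a - x))
      = (\<Sum>x\<in>V. (lam V x / (a - x) - lam V x / (b - x)) / (a - b))"
  proof (rule sum.cong)
    fix x assume x: "x \<in> V"
    have "x - b \<noteq> 0" "a - x \<noteq> 0" "b - x \<noteq> 0" using nz[OF x] by auto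
    have "a - b \<noteq> 0" using ab by simp
    then show "lam V x / (x - b) / (a - x) = (lam V x / (a - x) - lam V x / (b - x)) / (a - b)"
      using \<open>x - b \<noteq> 0\<close> \<open>a - x \<noteq> 0\<close> \<open>b - x \<noteq> 0\<close>
      by (simp add: divide_simps) (simp add: algebra_simps)
  qed simp
  also have "\<dots> = ((\<Sum>x\<in>V. lam V x / (a - x)) - (\<Sum>x\<in>V. lam V x / (b - x))) / (a - b)"
    by (subst sum_divide_distrib[symmetric]) (simp add: sum_subtractf)
  also have "\<dots> = (1 / (\<Prod>y\<in>V. (a - y)) - 1 / (\<Prod>y\<in>V. (b - y))) / (a - b)"
    using insert by simp
  finally have "(\<Sum>x\<in>insert b V. lam (insert b V) x / (a - x)) =
     1 / (\<Prod>y\<in>V. (b - y)) / (a - b) + (1 / (\<Prod>y\<in>V. (a - y)) - 1 / (\<Prod>y\<in>V. (b - y))) / (a - b)"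
    using insert by (simp add: lam_insert_self)
  also have "\<dots> = 1 / (\<Prod>y\<in>V. (a - y)) / (a - b)"
    by (simp only: add_divide_distrib[symmetric]) simp
  also have "\<dots> = 1 / (\<Prod>y\<in>insert b V. (a - y))"
    using insert by simp
  finally show ?case .
qed

lemma lam_sum:
  assumes "finite V" "k + 1 \<le> card V"
  shows "(\<Sum>x\<in>V. lam V x * x ^ k) = (if k + 1 = card V then 1 else 0)"
  using assms
proof (induction V arbitrary: k rule: finite_induct)
  case empty
  then show ?case by simp
next
  case (insert a V)
  show ?case
  proof (cases "V = {}")
    case True
    with insert show ?thesis by (simp add: lam_def)
  next
    case False
    have cV: "card (insert a V) = card V + 1" using insert by simp
    have nz: "\<And>x. x \<in> V \<Longrightarrow> x - a \<noteq> 0" using insert by auto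
    have split: "\<And>x. x \<in> V \<Longrightarrow> lam V x / (x - a) * x ^ k
        = lam V x * (\<Sum>m<k. a ^ (k - Suc m) * x ^ m) + a ^ k * (lam V x / (x - a))"
    proof -
      fix x assume x: "x \<in> V"
      have e: "x ^ k = a ^ k + (x - a) * (\<Sum>m<k. a ^ (k - Suc m) * x ^ m)"
        using power_diff_sumr2[of x k a] by (simp add: algebra_simps)
      show "lam V x / (x - a) * x ^ k
        = lam V x * (\<Sum>m<k. a ^ (k - Suc m) * x ^ m) + a ^ k * (lam V x / (x - a))"
        using nz[OF x] by (subst e) (simp add: field_simps)
    qed
    have "(\<Sum>x\<in>insert a V. lam (insert a V) x * x ^ k)
       = lam (insert a V) a * a ^ k + (\<Sum>x\<in>V. lam V x / (x - a) * x ^ k)"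
      using insert by (simp add: lam_insert)
    also have "(\<Sum>x\<in>V. lam V x / (x - a) * x ^ k)
       = (\<Sum>x\<in>V. lam V x * (\<Sum>m<k. a ^ (k - Suc m) * x ^ m)) + a ^ k * (\<Sum>x\<in>V. lam V x / (x - a))"
    proof -
      have "(\<Sum>x\<in>V. lam V x / (x - a) * x ^ k)
        = (\<Sum>x\<in>V. lam V x * (\<Sum>m<k. a ^ (k - Suc m) * x ^ m) + a ^ k * (lam V x / (x - a)))"
        by (rule sum.cong[OF refl]) (rule split)
      also have "\<dots> = (\<Sum>x\<in>V. lam V x * (\<Sum>m<k. a ^ (k - Suc m) * x ^ m)) + a ^ k * (\<Sum>x\<in>V. lam V x / (x - a))"
        by (simp only: sum.distrib sum_distrib_left)
      finally show ?thesis .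
    qed
    also have "(\<Sum>x\<in>V. lam V x * (\<Sum>m<k. a ^ (k - Suc m) * x ^ m))
       = (\<Sum>m<k. a ^ (k - Suc m) * (\<Sum>x\<in>V. lam V x * x ^ m))"
      by (simp add: sum_distrib_left sum.swap[of _ V] algebra_simps)
    also have "\<dots> = (\<Sum>m<k. a ^ (k - Suc m) * (if m + 1 = card V then 1 else 0))"
      using insert cV by (intro sum.cong) auto
    also have "\<dots> = (if k = card V then 1 else 0)"
    proof (cases "k = card V")
      case True
      have "card V \<noteq> 0" using False insert by simp
      then obtain m0 where m0: "card V = Suc m0" by (cases "card V") auto
      have "(\<Sum>m<k. a ^ (k - Suc m) * (if m + 1 = card V then 1 else 0))
          = (\<Sum>m\<in>{m0}. a ^ (k - Suc m) * (if m + 1 = card V then 1 else 0))"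
        using True m0 by (intro sum.mono_neutral_right) auto
      then show ?thesis using True m0 by simp
    next
      case f: False
      then show ?thesis using insert cV by (intro trans[OF sum.neutral]) auto
    qed
    also have "(\<Sum>x\<in>V. lam V x / (x - a)) = - (\<Sum>x\<in>V. lam V x / (a - x))"
      by (simp add: sum_negf[symmetric] minus_divide_right)
    also have "\<dots> = - (1 / (\<Prod>y\<in>V. (a - y)))"
      using lam_pf[of V a] insert False by simp
    finally show ?thesis using insert cV by (simp add: lam_insert_self)
  qed
qed



lemma vdm:
  fixes W :: "real set" and w :: "real \<Rightarrow> real"
  assumes "finite W"
  shows "card W \<le> d + 1 \<Longrightarrow> (\<forall>j\<le>d. (\<Sum>x\<in>W. w x * x ^ j) = 0) \<Longrightarrow> x \<in> W \<Longrightarrow> w x = 0"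
  using assms
proof (induction W arbitrary: d w x rule: finite_induct)
  case empty
  then show ?case by simp
next
  case (insert a W)
  show ?case
  proof (cases "W = {}")
    case True
    have "(\<Sum>x\<in>insert a W. w x * x ^ 0) = 0" using insert.prems(2) by blast
    hence "w a = 0" using True by simp
    then show ?thesis using True insert.prems(3) by simp
  next
    case False
    have "card W \<ge> 1" using False insert by (simp add: Suc_leI card_gt_0_iff)
    hence cW: "card (insert a W) = card W + 1" using insert by simp
    with insert.prems \<open>card W \<ge> 1\<close> have d1: "d \<ge> 1" by simp
    define w' where "w' y = w y * (y - a)" for y
    have h: "\<forall>j\<le>d - 1. (\<Sum>y\<in>W. w' y * y ^ j) = 0"
    proof (intro allI impI)
      fix j assume j: "j \<le> d - 1"
      have "(\<Sum>y\<in>W. w' y * y ^ j) = (\<Sum>y\<in>insert a W. w y * (y - a) * y ^ j)"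
        using insert by (simp add: w'_def)
      also have "\<dots> = (\<Sum>y\<in>insert a W. w y * y ^ (Suc j)) - a * (\<Sum>y\<in>insert a W. w y * y ^ j)"
        by (simp add: sum_distrib_left sum_subtractf[symmetric] algebra_simps)
      also have "\<dots> = 0"
      proof -
        have "Suc j \<le> d" "j \<le> d" using j d1 by auto
        hence e1: "(\<Sum>y\<in>insert a W. w y * y ^ Suc j) = 0" and e0: "(\<Sum>y\<in>insert a W. w y * y ^ j) = 0"
          using insert.prems(2) by blast+
        show ?thesis by (simp only: e1 e0)
      qed
      finally show "(\<Sum>y\<in>W. w' y * y ^ j) = 0" .
    qed
    have W0: "\<And>y. y \<in> W \<Longrightarrow> w y = 0"
    proof -
      fix y assume y: "y \<in> W"
      have "w' y = 0" using insert.IH[of "d - 1" w' y] h y cW insert.prems d1 by simp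
      moreover have "y - a \<noteq> 0" using y insert by auto
      ultimately show "w y = 0" by (simp add: w'_def)
    qed
    have "(\<Sum>y\<in>insert a W. w y * y ^ 0) = 0" using insert.prems(2) by auto
    hence "w a = 0" using insert W0 by simp
    then show ?thesis using insert.prems W0 by auto
  qed
qed

lemma mem_conv:
  assumes "finite S" "\<forall>s\<in>S. 0 \<le> \<alpha> s" "sum \<alpha> S = 1"
  shows "(\<lambda>j. \<Sum>s\<in>S. \<alpha> s * moment d s j) \<in> conv_simplex d S"
proof -
  define u where "u P = (\<Sum>s\<in>{s. s \<in> S \<and> moment d s = P}. \<alpha> s)" for P
  have "(\<forall>x\<in>moment d ` S. 0 \<le> u x)"
    using assms unfolding u_def by (auto intro!: sum_nonneg)
  moreover have "sum u (moment d ` S) = 1"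
    using assms sum.image_gen[OF assms(1), of \<alpha> "moment d"] unfolding u_def by simp
  moreover have "(\<lambda>j. \<Sum>s\<in>S. \<alpha> s * moment d s j) = (\<lambda>j. \<Sum>x\<in>moment d ` S. u x * x j)"
  proof
    fix j
    have "(\<Sum>s\<in>S. \<alpha> s * moment d s j) =
        (\<Sum>P\<in>moment d ` S. \<Sum>s\<in>{s. s \<in> S \<and> moment d s = P}. \<alpha> s * moment d s j)"
      by (rule sum.image_gen[OF assms(1)])
    also have "\<dots> = (\<Sum>P\<in>moment d ` S. \<Sum>s\<in>{s. s \<in> S \<and> moment d s = P}. \<alpha> s * P j)"
      by (intro sum.cong refl) auto
    also have "\<dots> = (\<Sum>x\<in>moment d ` S. u x * x j)"
      unfolding u_def by (simp add: sum_distrib_right)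
    finally show "(\<Sum>s\<in>S. \<alpha> s * moment d s j) = (\<Sum>x\<in>moment d ` S. u x * x j)" .
  qed
  ultimately show ?thesis unfolding conv_simplex_def conv_fin_def by blast
qed

lemma height_eq:
  assumes "finite S" "card S \<le> d + 1" "\<forall>s\<in>S. 0 \<le> \<alpha> s" "sum \<alpha> S = 1"
  shows "height d S (\<lambda>j. \<Sum>s\<in>S. \<alpha> s * moment d s j) = (\<Sum>s\<in>S. \<alpha> s * s ^ (d + 1))"
proof -
  define p where "p = (\<lambda>j. \<Sum>s\<in>S. \<alpha> s * moment d s j)"
  define q0 where "q0 = (\<lambda>j. \<Sum>s\<in>S. \<alpha> s * moment (Suc d) s j)"
  have q0mem: "q0 \<in> conv_simplex (Suc d) S" unfolding q0_def by (rule mem_conv[OF assms(1,3,4)])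
  have pq0: "proj d q0 = p"
  proof
    fix j
    show "proj d q0 j = p j"
    proof (cases "j \<le> d")
      case True
      then have "\<And>s. moment (Suc d) s j = moment d s j" by (simp add: moment_def)
      then show ?thesis using True unfolding proj_def q0_def p_def by simp
    next
      case False
      then have "\<And>s. moment d s j = 0" by (simp add: moment_def)
      then show ?thesis using False unfolding proj_def q0_def p_def by simp
    qed
  qed
  have inj: "inj_on (moment (Suc d)) S"
  proof (rule inj_onI)
    fix x y assume "moment (Suc d) x = moment (Suc d) y"
    hence "moment (Suc d) x 1 = moment (Suc d) y 1" by simp
    thus "x = y" by (simp add: moment_def)
  qed
  have uniq: "q = q0" if q: "q \<in> conv_simplex (Suc d) S" "proj d q = p" for q
  proof -
    obtain u where u: "\<forall>x\<in>moment (Suc d) ` S. 0 \<le> u x" "sum u (moment (Suc d) ` S) = 1"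
      "q = (\<lambda>j. \<Sum>x\<in>moment (Suc d) ` S. u x * x j)"
      using q(1) unfolding conv_simplex_def conv_fin_def by blast
    define u' where "u' s = u (moment (Suc d) s)" for s
    have qe: "q = (\<lambda>j. \<Sum>s\<in>S. u' s * moment (Suc d) s j)"
      using u(3) sum.reindex[OF inj, of "\<lambda>x. u x * x j" for j] unfolding u'_def by (simp add: comp_def)
    have su: "sum u' S = 1" using u(2) sum.reindex[OF inj, of u] unfolding u'_def by (simp add: comp_def)
    define w where "w s = u' s - \<alpha> s" for s
    have wz: "\<forall>j\<le>d. (\<Sum>x\<in>S. w x * x ^ j) = 0"
    proof (intro allI impI)
      fix j assume j: "j \<le> d"
      show "(\<Sum>x\<in>S. w x * x ^ j) = 0"
      proof (cases "j = 0")
        case True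
        then show ?thesis using su assms(4) by (simp add: w_def sum_subtractf)
      next
        case False
        have "proj d q j = proj d q0 j" using q(2) pq0 by simp
        hence "q j = q0 j" using j by (simp add: proj_def)
        hence "(\<Sum>s\<in>S. u' s * moment (Suc d) s j) = (\<Sum>s\<in>S. \<alpha> s * moment (Suc d) s j)"
          using qe q0_def by simp
        moreover have "\<And>s. moment (Suc d) s j = s ^ j" using j False by (simp add: moment_def)
        ultimately show ?thesis by (simp add: w_def algebra_simps sum_subtractf)
      qed
    qed
    have "\<And>s. s \<in> S \<Longrightarrow> u' s = \<alpha> s"
      using vdm[OF assms(1) assms(2) wz] unfolding w_def by simp
    then show "q = q0" unfolding qe q0_def by (intro ext sum.cong) auto
  qed
  have "(THE q. q \<in> conv_simplex (Suc d) S \<and> proj d q = p) = q0"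
  proof (rule the_equality)
    show "q0 \<in> conv_simplex (Suc d) S \<and> proj d q0 = p" using q0mem pq0 by blast
    show "\<And>q. q \<in> conv_simplex (Suc d) S \<and> proj d q = p \<Longrightarrow> q = q0" using uniq by blast
  qed
  then have "height d S p = q0 (Suc d)" unfolding height_def by simp
  also have "\<dots> = (\<Sum>s\<in>S. \<alpha> s * s ^ (d + 1))" unfolding q0_def moment_def by simp
  finally show ?thesis unfolding p_def .
qed



lemma sign_prod:
  fixes v :: "nat \<Rightarrow> real"
  shows "\<forall>i j. i < j \<and> j \<le> n \<longrightarrow> v i < v j \<Longrightarrow> i \<le> n \<Longrightarrow>
    0 < (-1::real) ^ (n - i) * (\<Prod>j\<in>{..n}-{i}. (v i - v j))"
proof (induction n arbitrary: i)
  case 0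
  then show ?case by simp
next
  case (Suc n)
  show ?case
  proof (cases "i \<le> n")
    case True
    have IH: "0 < (-1::real) ^ (n - i) * (\<Prod>j\<in>{..n}-{i}. (v i - v j))"
      using Suc.IH[OF _ True] Suc.prems(1) by auto
    have "{..Suc n}-{i} = insert (Suc n) ({..n}-{i})" using True by auto
    hence hP: "(\<Prod>j\<in>{..Suc n}-{i}. (v i - v j)) = (v i - v (Suc n)) * (\<Prod>j\<in>{..n}-{i}. (v i - v j))"
      by simp
    have hs: "(-1::real) ^ (Suc n - i) = - ((-1) ^ (n - i))"
      using True by (simp add: Suc_diff_le)
    have "v i < v (Suc n)" using Suc.prems(1) True by auto
    have "(-1::real) ^ (Suc n - i) * (\<Prod>j\<in>{..Suc n}-{i}. (v i - v j))
       = (v (Suc n) - v i) * ((-1) ^ (n - i) * (\<Prod>j\<in>{..n}-{i}. (v i - v j)))"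
      unfolding hP hs by (simp add: algebra_simps)
    also have "\<dots> > 0" using IH \<open>v i < v (Suc n)\<close> by simp
    finally show ?thesis .
  next
    case False
    hence i: "i = Suc n" using Suc.prems by simp
    have "{..Suc n}-{i} = {..n}" using i by auto
    moreover have "0 < (\<Prod>j\<in>{..n}. (v i - v j))"
      using Suc.prems(1) i by (intro prod_pos) auto
    ultimately show ?thesis using i by simp
  qed
qed

lemma core:
  fixes A B :: "real set"
  assumes fA: "finite A" and fB: "finite B" and cA: "card A \<le> d + 1" and cB: "card B \<le> d + 1"
    and il: "interlacing_from A B (d + 2)"
  shows "\<exists>p\<in>conv_simplex d A \<inter> conv_simplex d B. 0 < (-1::real) ^ (d + 1) * (height d A p - height d B p)"
proof -
  obtain v where mono: "\<forall>i j. i < j \<and> j < d + 2 \<longrightarrow> v i < v j"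
    and vm: "\<forall>i<d + 2. v i \<in> (if even i then A else B)"
    using il unfolding interlacing_from_def by blast
  define n where "n = d + 1"
  define I where "I = {..n}"
  have mono': "\<forall>i j. i < j \<and> j \<le> n \<longrightarrow> v i < v j" using mono n_def by auto
  have inj: "inj_on v I"
  proof (rule inj_onI)
    fix i j assume "i \<in> I" "j \<in> I" "v i = v j"
    then show "i = j" using mono' unfolding I_def
      by (metis atMost_iff less_irrefl linorder_neqE_nat)
  qed
  define V where "V = v ` I"
  have fV: "finite V" unfolding V_def I_def by simp
  have cV: "card V = n + 1" unfolding V_def using card_image[OF inj] by (simp add: I_def)
  define \<epsilon> where "\<epsilon> = (-1::real) ^ n"
  define L where "L i = \<epsilon> * lam V (v i)" for i
  have lamv: "lam V (v i) = 1 / (\<Prod>j\<in>I-{i}. (v i - v j))" if "i \<in> I" for i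
  proof -
    have "V - {v i} = v ` (I - {i})" unfolding V_def using inj that by (auto simp: inj_on_def)
    moreover have "inj_on v (I - {i})" using inj by (rule inj_on_subset) auto
    ultimately show ?thesis unfolding lam_def by (simp add: prod.reindex)
  qed
  have sgn: "(-1::real) ^ (n - i) = (if even i then \<epsilon> else - \<epsilon>)" if "i \<le> n" for i
    using that unfolding \<epsilon>_def by (auto simp: minus_one_power_iff)
  have Lpos: "L i > 0" if "i \<in> I" "even i" for i
  proof -
    have "0 < (-1::real) ^ (n - i) * (\<Prod>j\<in>I-{i}. (v i - v j))"
      using sign_prod[OF mono'] that unfolding I_def by auto
    hence "0 < \<epsilon> * (\<Prod>j\<in>I-{i}. (v i - v j))" using sgn that I_def by auto
    thus ?thesis unfolding L_def lamv[OF that(1)]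
      by (auto simp: zero_less_mult_iff zero_less_divide_iff)
  qed
  have Lneg: "L i < 0" if "i \<in> I" "odd i" for i
  proof -
    have "0 < (-1::real) ^ (n - i) * (\<Prod>j\<in>I-{i}. (v i - v j))"
      using sign_prod[OF mono'] that unfolding I_def by auto
    hence "0 < - \<epsilon> * (\<Prod>j\<in>I-{i}. (v i - v j))" using sgn that I_def by auto
    thus ?thesis unfolding L_def lamv[OF that(1)]
      by (auto simp: zero_less_mult_iff mult_less_0_iff divide_less_0_iff)
  qed
  have SV: "(\<Sum>i\<in>I. L i * v i ^ k) = (if k = n then \<epsilon> else 0)" if "k \<le> n" for k
  proof -
    have "(\<Sum>x\<in>V. lam V x * x ^ k) = (if k = n then 1 else 0)"
      using lam_sum[OF fV, of k] cV that by simp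
    moreover have "(\<Sum>x\<in>V. lam V x * x ^ k) = (\<Sum>i\<in>I. lam V (v i) * v i ^ k)"
      unfolding V_def by (simp add: sum.reindex[OF inj])
    ultimately show ?thesis unfolding L_def
      by (simp add: sum_distrib_left[symmetric] mult.assoc)
  qed
  define Ei where "Ei = {i\<in>I. even i}"
  define Oi where "Oi = {i\<in>I. odd i}"
  have fI: "finite I" "finite Ei" "finite Oi" unfolding I_def Ei_def Oi_def by auto
  have splitI: "(\<Sum>i\<in>I. f i) = (\<Sum>i\<in>Ei. f i) + (\<Sum>i\<in>Oi. f i)" for f :: "nat \<Rightarrow> real"
  proof -
    have "I = Ei \<union> Oi" "Ei \<inter> Oi = {}" unfolding Ei_def Oi_def by auto
    thus ?thesis using sum.union_disjoint[OF fI(2,3)] by simp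
  qed
  define c where "c = (\<Sum>i\<in>Ei. L i)"
  have c0: "c > 0" unfolding c_def
  proof (rule sum_pos[OF fI(2)])
    show "Ei \<noteq> {}" unfolding Ei_def I_def by auto
    show "\<And>i. i \<in> Ei \<Longrightarrow> 0 < L i" using Lpos unfolding Ei_def by auto
  qed
  have sO: "(\<Sum>i\<in>Oi. L i) = - c"
  proof -
    have "(\<Sum>i\<in>I. L i * v i ^ 0) = 0" using SV[of 0] n_def by simp
    thus ?thesis using splitI[of L] unfolding c_def by simp
  qed
  define E where "E = v ` Ei"
  define Ov where "Ov = v ` Oi"
  have injE: "inj_on v Ei" "inj_on v Oi" using inj unfolding Ei_def Oi_def
    by (auto intro: inj_on_subset)
  have EA: "E \<subseteq> A"
  proof
    fix s assume "s \<in> E"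
    then obtain i where "i \<le> n" "even i" "s = v i" unfolding E_def Ei_def I_def by auto
    moreover have "i < d + 2" using \<open>i \<le> n\<close> n_def by simp
    ultimately show "s \<in> A" using vm by fastforce
  qed
  have OB: "Ov \<subseteq> B"
  proof
    fix s assume "s \<in> Ov"
    then obtain i where "i \<le> n" "odd i" "s = v i" unfolding Ov_def Oi_def I_def by auto
    moreover have "i < d + 2" using \<open>i \<le> n\<close> n_def by simp
    ultimately show "s \<in> B" using vm by fastforce
  qed
  define \<alpha>A where "\<alpha>A s = (if s \<in> E then \<epsilon> * lam V s / c else 0)" for s
  define \<alpha>B where "\<alpha>B s = (if s \<in> Ov then - (\<epsilon> * lam V s) / c else 0)" for s
  have tA: "(\<Sum>s\<in>A. \<alpha>A s * f s) = (\<Sum>i\<in>Ei. L i * f (v i)) / c" for f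
  proof -
    have "(\<Sum>s\<in>A. \<alpha>A s * f s) = (\<Sum>s\<in>A. if s \<in> E then \<epsilon> * lam V s / c * f s else 0)"
      by (intro sum.cong) (auto simp: \<alpha>A_def)
    also have "\<dots> = (\<Sum>s\<in>A \<inter> E. \<epsilon> * lam V s / c * f s)"
      by (rule sum.inter_restrict[OF fA, symmetric])
    also have "A \<inter> E = E" using EA by auto
    also have "(\<Sum>s\<in>E. \<epsilon> * lam V s / c * f s) = (\<Sum>i\<in>Ei. \<epsilon> * lam V (v i) / c * f (v i))"
      unfolding E_def by (simp add: sum.reindex[OF injE(1)])
    also have "\<dots> = (\<Sum>i\<in>Ei. L i * f (v i)) / c"
      by (simp add: L_def sum_divide_distrib)
    finally show ?thesis .
  qed
  have tB: "(\<Sum>s\<in>B. \<alpha>B s * f s) = - (\<Sum>i\<in>Oi. L i * f (v i)) / c" for f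
  proof -
    have "(\<Sum>s\<in>B. \<alpha>B s * f s) = (\<Sum>s\<in>B. if s \<in> Ov then - (\<epsilon> * lam V s) / c * f s else 0)"
      by (intro sum.cong) (auto simp: \<alpha>B_def)
    also have "\<dots> = (\<Sum>s\<in>B \<inter> Ov. - (\<epsilon> * lam V s) / c * f s)"
      by (rule sum.inter_restrict[OF fB, symmetric])
    also have "B \<inter> Ov = Ov" using OB by auto
    also have "(\<Sum>s\<in>Ov. - (\<epsilon> * lam V s) / c * f s) = (\<Sum>i\<in>Oi. - (\<epsilon> * lam V (v i)) / c * f (v i))"
      unfolding Ov_def by (simp add: sum.reindex[OF injE(2)])
    also have "\<dots> = - (\<Sum>i\<in>Oi. L i * f (v i)) / c"
      by (simp add: L_def sum_divide_distrib sum_negf[symmetric])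
    finally show ?thesis .
  qed
  have nA: "\<forall>s\<in>A. 0 \<le> \<alpha>A s"
  proof
    fix s assume "s \<in> A"
    show "0 \<le> \<alpha>A s"
    proof (cases "s \<in> E")
      case True
      then obtain i where "i \<in> Ei" "s = v i" unfolding E_def by auto
      hence "L i > 0" using Lpos unfolding Ei_def by auto
      thus ?thesis using True c0 \<open>s = v i\<close> unfolding \<alpha>A_def L_def by simp
    qed (simp add: \<alpha>A_def)
  qed
  have nB: "\<forall>s\<in>B. 0 \<le> \<alpha>B s"
  proof
    fix s assume "s \<in> B"
    show "0 \<le> \<alpha>B s"
    proof (cases "s \<in> Ov")
      case True
      then obtain i where "i \<in> Oi" "s = v i" unfolding Ov_def by auto
      hence "L i < 0" using Lneg unfolding Oi_def by auto
      thus ?thesis using True c0 \<open>s = v i\<close> unfolding \<alpha>B_def L_def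
        by (simp add: divide_nonpos_pos)
    qed (simp add: \<alpha>B_def)
  qed
  have sA: "sum \<alpha>A A = 1"
    using tA[of "\<lambda>_. 1"] c0 unfolding c_def by simp
  have sB: "sum \<alpha>B B = 1"
    using tB[of "\<lambda>_. 1"] c0 sO by simp
  define p where "p = (\<lambda>j. \<Sum>s\<in>A. \<alpha>A s * moment d s j)"
  have pB: "p = (\<lambda>j. \<Sum>s\<in>B. \<alpha>B s * moment d s j)"
  proof
    fix j
    have z: "(\<Sum>i\<in>I. L i * moment d (v i) j) = 0"
    proof (cases "1 \<le> j \<and> j \<le> d")
      case True
      then have "(\<Sum>i\<in>I. L i * moment d (v i) j) = (\<Sum>i\<in>I. L i * v i ^ j)"
        by (simp add: moment_def)
      also have "\<dots> = 0" using SV[of j] True n_def by simp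
      finally show ?thesis .
    next
      case False
      then have "\<And>i. moment d (v i) j = 0" by (auto simp: moment_def)
      then show ?thesis by simp
    qed
    show "p j = (\<Sum>s\<in>B. \<alpha>B s * moment d s j)"
      unfolding p_def tA tB using z splitI[of "\<lambda>i. L i * moment d (v i) j"] c0
      by (simp add: field_simps)
  qed
  have pA: "p \<in> conv_simplex d A" unfolding p_def by (rule mem_conv[OF fA nA sA])
  have pB': "p \<in> conv_simplex d B" unfolding pB by (rule mem_conv[OF fB nB sB])
  have hA: "height d A p = (\<Sum>i\<in>Ei. L i * v i ^ (d + 1)) / c"
  proof -
    have "height d A p = (\<Sum>s\<in>A. \<alpha>A s * s ^ (d + 1))"
      unfolding p_def by (rule height_eq[OF fA cA nA sA])
    also have "\<dots> = (\<Sum>i\<in>Ei. L i * v i ^ (d + 1)) / c" by (rule tA)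
    finally show ?thesis .
  qed
  have hB: "height d B p = - (\<Sum>i\<in>Oi. L i * v i ^ (d + 1)) / c"
  proof -
    have "height d B p = (\<Sum>s\<in>B. \<alpha>B s * s ^ (d + 1))"
      unfolding pB by (rule height_eq[OF fB cB nB sB])
    also have "\<dots> = - (\<Sum>i\<in>Oi. L i * v i ^ (d + 1)) / c" by (rule tB)
    finally show ?thesis .
  qed
  have "height d A p - height d B p = (\<Sum>i\<in>I. L i * v i ^ (d + 1)) / c"
    unfolding hA hB splitI by (simp add: add_divide_distrib)
  also have "\<dots> = \<epsilon> / c" using SV[of n] n_def by simp
  finally have "(-1::real) ^ (d + 1) * (height d A p - height d B p) = \<epsilon> * \<epsilon> / c"
    unfolding \<epsilon>_def n_def by simp
  also have "\<epsilon> * \<epsilon> = 1" unfolding \<epsilon>_def by (simp flip: power_mult_distrib)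
  finally have "(-1::real) ^ (d + 1) * (height d A p - height d B p) = 1 / c" .
  hence "0 < (-1::real) ^ (d + 1) * (height d A p - height d B p)" using c0 by simp
  thus ?thesis using pA pB' by blast
qed


theorem proposition2p3:
  fixes d :: nat and S T :: "real set"
  assumes "finite S" and "finite T"
    and "card S \<le> d + 1" and "card T \<le> d + 1"
    and "if even d then interlacing_from S T (d + 2) else interlacing_from T S (d + 2)"
  shows "\<exists>p \<in> conv_simplex d S \<inter> conv_simplex d T. height d S p < height d T p"
proof (cases "even d")
  case True
  then have "interlacing_from S T (d + 2)" using assms(5) by simp
  then obtain p where p: "p \<in> conv_simplex d S \<inter> conv_simplex d T"
    "0 < (-1::real) ^ (d + 1) * (height d S p - height d T p)"
    using core[OF assms(1-4)] by blast
  have "(-1::real) ^ (d + 1) = -1" using True by (simp add: minus_one_power_iff)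
  then show ?thesis using p by auto
next
  case False
  then have "interlacing_from T S (d + 2)" using assms(5) by simp
  then obtain p where p: "p \<in> conv_simplex d T \<inter> conv_simplex d S"
    "0 < (-1::real) ^ (d + 1) * (height d T p - height d S p)"
    using core[OF assms(2) assms(1) assms(4) assms(3)] by blast
  have "(-1::real) ^ (d + 1) = 1" using False by (simp add: minus_one_power_iff)
  then show ?thesis using p by auto
qed

end
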